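(* Given positive integers $n$ and $g$, there exists an integer $d_0$, depending only on $n$ and $g$, such that for every integer $d>d_0$ and every subgroup $H\subset(\mathbb{Z}/d\mathbb{Z})^\times$ of index $2g$, every coset of $H$ in $(\mathbb{Z}/d\mathbb{Z})^\times$ contains an element whose least nonnegative residue modulo $d$ lies in the open interval $(0,d/n)$. *)

theory Defs
  imports "HOL-Number_Theory.Number_Theory"
begin

text \<open>The unit group (Z/dZ)^* realised as the units of the library residue ring
  on the carrier {0..d-1}; elements are thus least nonnegative residues.\<close>
abbreviation units_mod :: "nat \<Rightarrow> int monoid" where
  "units_mod d \<equiv> units_of (residue_ring (int d))"

end

theory Submission
  imports Defs
begin


definition ee :: "int \<Rightarrow> int \<Rightarrow> complex" where
  "ee m t = cis (2 * pi * of_int t / of_int m)"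

lemma ee_add: "ee m (a + b) = ee m a * ee m b"
  by (simp add: ee_def cis_mult add_divide_distrib ring_distribs)

lemma ee_mult_self: "m \<noteq> 0 \<Longrightarrow> ee m (m * k) = 1"
proof -
  assume m: "m \<noteq> 0"
  have "2 * pi * of_int (m*k) / of_int m = 2 * pi * of_int k" using m by simp
  moreover have "cis (2 * pi * real_of_int k) = 1" by (rule cis_multiple_2pi) simp
  ultimately show ?thesis by (simp add: ee_def)
qed

lemma ee_cong: assumes "m \<noteq> 0" "a mod m = b mod m" shows "ee m a = ee m b"
proof -
  have "m dvd a - b" using assms(2) by (simp add: mod_eq_dvd_iff)
  then obtain k where "a - b = m * k" by (auto elim: dvdE)
  hence "a = b + m * k" by simp
  thus ?thesis using assms(1) by (simp add: ee_add ee_mult_self)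
qed

lemma ee_mod: "m \<noteq> 0 \<Longrightarrow> ee m (a mod m) = ee m a"
  by (rule ee_cong) auto

lemma ee_cnj: "cnj (ee m t) = ee m (-t)"
  by (simp add: ee_def cis_cnj)

lemma norm_ee [simp]: "norm (ee m t) = 1"
  by (simp add: ee_def)

lemma ee_scale: "g \<noteq> 0 \<Longrightarrow> ee (g*m) (g*t) = ee m t"
  by (simp add: ee_def ac_simps)

lemma ee_power: "ee m (int k * t) = ee m t ^ k"
  by (simp add: ee_def DeMoivre mult_ac)

lemma ee_zero [simp]: "ee m 0 = 1"
  by (simp add: ee_def)

lemma ee_one_dvd: assumes "m \<noteq> 0" "ee m t = 1" shows "m dvd t"
proof -
  have "cos (2 * pi * of_int t / of_int m) = 1" using assms(2)
    by (simp add: ee_def complex_eq_iff)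
  then obtain k :: int where k: "2 * pi * of_int t / of_int m = of_int k * 2 * pi"
    by (auto simp: cos_one_2pi_int)
  hence "real_of_int t = real_of_int (k * m)" using assms(1) by (simp add: field_simps)
  hence "t = k * m" by (simp only: of_int_eq_iff)
  thus ?thesis by simp
qed

lemma orth:
  assumes m: "m > 0"
  shows "(\<Sum>s\<in>{0..<m}. ee m (s*z)) = (if m dvd z then of_int m else 0)"
proof (cases "m dvd z")
  case True
  then obtain k where z: "z = m * k" by (auto elim: dvdE)
  have "(\<Sum>s\<in>{0..<m}. ee m (s*z)) = (\<Sum>s\<in>{0..<m}. 1)"
  proof (intro sum.cong refl)
    fix s show "ee m (s*z) = 1" using m ee_mult_self[of m "s*k"] by (simp add: z mult.left_commute)
  qed
  thus ?thesis using True m by simp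
next
  case False
  define w where "w = ee m z"
  have w1: "w \<noteq> 1" using False ee_one_dvd[of m z] m by (auto simp: w_def)
  have wm: "w ^ nat m = 1" using m by (simp add: w_def ee_power[symmetric] ee_mult_self)
  have img: "{0..<m} = int ` {..<nat m}" using m
    by (auto simp: image_iff intro!: bexI[of _ "nat _"])
  have "(\<Sum>s\<in>{0..<m}. ee m (s*z)) = (\<Sum>k\<in>{..<nat m}. ee m (int k * z))"
    unfolding img by (subst sum.reindex) (auto simp: inj_on_def)
  also have "\<dots> = (\<Sum>k<nat m. w ^ k)" by (simp add: w_def ee_power)
  also have "\<dots> = 0" using w1 wm by (simp add: geometric_sum)
  finally show ?thesis using False by simp
qed

lemma class_card_le:
  fixes A :: "int set"
  assumes m: "m > 0" and sub: "(\<lambda>y. y div m) ` {y\<in>A. y mod m = r} \<subseteq> B" and B: "finite B"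
  shows "card {y\<in>A. y mod m = r} \<le> card B"
proof -
  have "inj_on (\<lambda>y. y div m) {y\<in>A. y mod m = r}"
  proof (rule inj_onI)
    fix x y assume "x \<in> {y\<in>A. y mod m = r}" "y \<in> {y\<in>A. y mod m = r}" "x div m = y div m"
    hence "x mod m = y mod m" "x div m = y div m" by auto
    hence "m * (x div m) + x mod m = m * (y div m) + y mod m" by simp
    thus "x = y" by (simp only: mult_div_mod_eq)
  qed
  hence "card {y\<in>A. y mod m = r} = card ((\<lambda>y. y div m) ` {y\<in>A. y mod m = r})"
    by (simp add: card_image)
  also have "\<dots> \<le> card B" using sub B by (intro card_mono)
  finally show ?thesis .
qed

lemma class_card_interval0:
  fixes A :: "int set"
  assumes m: "m > 0" "g \<ge> 0" and A: "A \<subseteq> {0..<g*m}"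
  shows "card {y\<in>A. y mod m = r} \<le> nat g"
proof -
  have "(\<lambda>y. y div m) ` {y\<in>A. y mod m = r} \<subseteq> {0..<g}"
  proof
    fix z assume "z \<in> (\<lambda>y. y div m) ` {y\<in>A. y mod m = r}"
    then obtain y where y: "y \<in> A" "z = y div m" by auto
    have y0: "0 \<le> y" "y < g*m" using y A by auto
    have e: "m * (y div m) + y mod m = y" by (rule mult_div_mod_eq)
    have "y mod m \<ge> 0" using m by simp
    moreover have "y div m * m = m * (y div m)" by (rule mult.commute)
    ultimately have "y div m * m \<le> y" using e by linarith
    hence "y div m * m < g * m" using y0 by linarith
    hence "y div m < g" using m by (simp add: mult_less_cancel_right)
    thus "z \<in> {0..<g}" using y m y0 by (simp add: pos_imp_zdiv_nonneg_iff)
  qed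
  hence "card {y\<in>A. y mod m = r} \<le> card {0..<g}" by (rule class_card_le[OF m(1)]) simp
  thus ?thesis by simp
qed

lemma class_card_interval1:
  fixes A :: "int set"
  assumes m: "m > 0" and A: "A \<subseteq> {1..L}"
  shows "card {y\<in>A. y mod m = r} \<le> nat (L div m + 1)"
proof -
  have "(\<lambda>y. y div m) ` {y\<in>A. y mod m = r} \<subseteq> {0..L div m}"
  proof
    fix z assume "z \<in> (\<lambda>y. y div m) ` {y\<in>A. y mod m = r}"
    then obtain y where y: "y \<in> A" "z = y div m" by auto
    have "1 \<le> y" "y \<le> L" using y A by auto
    hence "y div m \<le> L div m" using m by (intro zdiv_mono1)
    moreover have "0 \<le> y div m" using \<open>1 \<le> y\<close> m by (simp add: pos_imp_zdiv_nonneg_iff)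
    ultimately show "z \<in> {0..L div m}" using y by simp
  qed
  hence "card {y\<in>A. y mod m = r} \<le> card {0..L div m}" by (rule class_card_le[OF m]) simp
  moreover have "card {0..L div m} = nat (L div m + 1)" by simp
  ultimately show ?thesis by simp
qed

lemma fiber_sum:
  fixes w :: "'b \<Rightarrow> real" and K :: real
  assumes "finite A" "finite B" "f ` A \<subseteq> B" "\<And>t. t \<in> B \<Longrightarrow> real (card {a\<in>A. f a = t}) \<le> K"
    "\<And>t. w t \<ge> 0"
  shows "(\<Sum>a\<in>A. w (f a)) \<le> K * (\<Sum>t\<in>B. w t)"
proof -
  have "(\<Sum>a\<in>A. w (f a)) = (\<Sum>t\<in>B. \<Sum>a\<in>{a\<in>A. f a = t}. w (f a))"
    using assms(1-3) by (rule sum.group[symmetric])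
  also have "\<dots> = (\<Sum>t\<in>B. real (card {a\<in>A. f a = t}) * w t)"
    by (intro sum.cong refl) simp
  also have "\<dots> \<le> (\<Sum>t\<in>B. K * w t)"
    using assms(4,5) by (intro sum_mono mult_right_mono) auto
  finally show ?thesis by (simp add: sum_distrib_left)
qed


definition gs :: "int \<Rightarrow> int set \<Rightarrow> int \<Rightarrow> complex" where
  "gs d A t = (\<Sum>x\<in>A. ee d (t*x))"

lemma gs_mod: "d \<noteq> 0 \<Longrightarrow> gs d A (t mod d) = gs d A t"
  unfolding gs_def by (intro sum.cong refl ee_cong) (auto simp: mod_mult_left_eq)

lemma sum_if_card:
  assumes "finite S"
  shows "(\<Sum>p\<in>S. if P p then (c::complex) else 0) = of_nat (card {p\<in>S. P p}) * c"
proof -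
  have "(\<Sum>p\<in>S. if P p then c else 0) = (\<Sum>p\<in>{p\<in>S. P p}. c)"
    using sum.inter_filter[OF assms, of "\<lambda>_. c" P] by simp
  thus ?thesis by simp
qed

lemma parseval:
  assumes g: "g > 0" and m: "m > 0" and A: "finite A"
  shows "(\<Sum>s\<in>{0..<m}. (cmod (gs (g*m) A (g*s)))^2) = real_of_int m * card {(x,y)\<in>A\<times>A. x mod m = y mod m}"
proof -
  have "complex_of_real (\<Sum>s\<in>{0..<m}. (cmod (gs (g*m) A (g*s)))^2) =
        (\<Sum>s\<in>{0..<m}. gs (g*m) A (g*s) * cnj (gs (g*m) A (g*s)))"
    by (subst of_real_sum) (simp only: complex_norm_square)
  also have "\<dots> = (\<Sum>s\<in>{0..<m}. \<Sum>x\<in>A. \<Sum>y\<in>A. ee m (s*(x-y)))"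
  proof (intro sum.cong refl)
    fix s
    have e: "\<And>x. ee (g*m) (g*s*x) = ee m (s*x)" using g by (simp add: mult.assoc ee_scale)
    have "gs (g*m) A (g*s) * cnj (gs (g*m) A (g*s)) = (\<Sum>x\<in>A. ee m (s*x)) * (\<Sum>y\<in>A. ee m (-(s*y)))"
      unfolding gs_def e by (simp add: cnj_sum ee_cnj)
    also have "\<dots> = (\<Sum>x\<in>A. \<Sum>y\<in>A. ee m (s*(x-y)))"
      by (simp add: sum_product ee_add[symmetric] right_diff_distrib)
    finally show "gs (g*m) A (g*s) * cnj (gs (g*m) A (g*s)) = (\<Sum>x\<in>A. \<Sum>y\<in>A. ee m (s*(x-y)))" .
  qed
  also have "\<dots> = (\<Sum>x\<in>A. \<Sum>y\<in>A. \<Sum>s\<in>{0..<m}. ee m (s*(x-y)))"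
    by (simp add: sum.swap[of _ "{0..<m}"])
  also have "\<dots> = (\<Sum>x\<in>A. \<Sum>y\<in>A. if x mod m = y mod m then of_int m else 0)"
    using m by (intro sum.cong refl) (simp add: orth mod_eq_dvd_iff)
  also have "\<dots> = (\<Sum>p\<in>A\<times>A. if fst p mod m = snd p mod m then of_int m else 0)"
    by (simp add: sum.cartesian_product case_prod_beta)
  also have "\<dots> = of_int m * of_nat (card {p\<in>A\<times>A. fst p mod m = snd p mod m})"
    using A by (subst sum_if_card) (simp_all add: mult.commute)
  also have "{p\<in>A\<times>A. fst p mod m = snd p mod m} = {(x,y)\<in>A\<times>A. x mod m = y mod m}" by auto
  also have "of_int m * of_nat (card {(x,y)\<in>A\<times>A. x mod m = y mod m}) =
     complex_of_real (real_of_int m * real (card {(x,y)\<in>A\<times>A. x mod m = y mod m}))" by simp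
  finally show ?thesis by (simp only: of_real_eq_iff)
qed

lemma pairs_card_le:
  assumes A: "finite A" and K: "\<And>x. x \<in> A \<Longrightarrow> card {y\<in>A. y mod m = x mod m} \<le> K"
  shows "card {(x,y)\<in>A\<times>A. x mod m = y mod m} \<le> card A * K"
proof -
  have "{(x,y)\<in>A\<times>A. x mod m = y mod m} = Sigma A (\<lambda>x. {y\<in>A. y mod m = x mod m})" by auto
  hence "card {(x,y)\<in>A\<times>A. x mod m = y mod m} = (\<Sum>x\<in>A. card {y\<in>A. y mod m = x mod m})"
    using A by simp
  also have "\<dots> \<le> (\<Sum>x\<in>A. K)" using K by (intro sum_mono) auto
  finally show ?thesis by simp
qed


lemma mult_fiber_cong:
  fixes b d u v :: int
  assumes b: "b \<noteq> 0" and d: "d > 0" and e: "(b*u) mod d = (b*v) mod d"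
  shows "u mod (d div gcd b d) = v mod (d div gcd b d)"
proof -
  define g where "g = gcd b d"
  define m where "m = d div g"
  have g0: "g > 0" unfolding g_def using b by simp
  have dg: "d = g * m" unfolding m_def g_def by simp
  have bg: "b = g * (b div g)" unfolding g_def by simp
  have cop: "coprime (b div g) m" unfolding m_def g_def using b by (intro div_gcd_coprime) auto
  have "d dvd b*u - b*v" using e by (simp add: mod_eq_dvd_iff)
  hence "g * m dvd g * ((b div g) * (u - v))" using dg bg
    by (metis mult.assoc right_diff_distrib)
  hence "m dvd (b div g) * (u - v)" using g0 by simp
  moreover have "coprime m (b div g)" using cop by (simp add: coprime_commute)
  ultimately have "m dvd u - v" by (simp add: coprime_dvd_mult_right_iff)
  thus ?thesis unfolding m_def g_def by (simp add: mod_eq_dvd_iff)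
qed

lemma gsC_bound:
  assumes d: "d > 1" and C: "C \<subseteq> {0..<d}" and H: "H \<subseteq> {0..<d}" and cH: "card C = card H"
    and Hne: "H \<noteq> {}"
    and inv: "\<forall>u\<in>H. \<forall>x\<in>C. (u*x) mod d \<in> C" and cop: "\<forall>u\<in>H. coprime u d"
    and b: "0 < b" "b < d"
  shows "(cmod (gs d C b))^2 \<le> real_of_int (d * gcd b d)"
proof -
  define g where "g = gcd b d"
  define m where "m = d div g"
  have g0: "g > 0" unfolding g_def using b by simp
  have dg: "d = g * m" unfolding m_def g_def by simp
  have "0 < g * m" using dg d by simp
  hence m0: "m > 0" using g0 by (rule zero_less_mult_pos)
  have fC: "finite C" using C by (rule finite_subset) simp
  have fH: "finite H" using H by (rule finite_subset) simp
  have C1: "gs d C (b*u) = gs d C b" if u: "u \<in> H" for u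
  proof -
    define f where "f = (\<lambda>x. (u*x) mod d)"
    have inj: "inj_on f C"
    proof (rule inj_onI)
      fix x y assume x: "x \<in> C" and y: "y \<in> C" and "f x = f y"
      hence "[u*x = u*y] (mod d)" by (simp add: f_def cong_def)
      hence "[x = y] (mod d)" using cop u by (simp add: cong_mult_lcancel)
      hence "x mod d = y mod d" by (simp add: cong_def)
      moreover have "x mod d = x" "y mod d = y" using x y C by (auto intro: mod_pos_pos_trivial)
      ultimately show "x = y" by simp
    qed
    have sub: "f ` C \<subseteq> C" using inv u by (auto simp: f_def)
    have img: "f ` C = C" using card_image[OF inj] sub fC by (intro card_subset_eq) auto
    have "gs d C (b*u) = (\<Sum>x\<in>C. ee d (b * f x))"
      unfolding gs_def f_def using d
      by (intro sum.cong refl ee_cong) (auto simp: mod_mult_right_eq mult.assoc)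
    also have "\<dots> = (\<Sum>y\<in>f`C. ee d (b*y))" by (simp add: sum.reindex[OF inj])
    also have "\<dots> = gs d C b" unfolding img gs_def ..
    finally show ?thesis .
  qed
  define w where "w = (\<lambda>t. (cmod (gs d C t))^2)"
  define T where "T = (\<lambda>s. g*s) ` {0..<m}"
  have "(\<Sum>u\<in>H. w ((b*u) mod d)) = (\<Sum>u\<in>H. w b)"
  proof (intro sum.cong refl)
    fix u assume "u \<in> H"
    hence "gs d C ((b*u) mod d) = gs d C b" using C1 gs_mod[of d C "b*u"] d by simp
    thus "w ((b*u) mod d) = w b" unfolding w_def by simp
  qed
  hence "real (card H) * w b = (\<Sum>u\<in>H. w ((b*u) mod d))" by simp
  also have "\<dots> \<le> real_of_int g * (\<Sum>t\<in>T. w t)"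
  proof (rule fiber_sum[where f="\<lambda>u. (b*u) mod d"])
    show "finite H" by fact
    show "finite T" unfolding T_def by simp
    show "(\<lambda>u. (b*u) mod d) ` H \<subseteq> T"
    proof
      fix t assume "t \<in> (\<lambda>u. (b*u) mod d) ` H"
      then obtain u where t: "t = (b*u) mod d" by auto
      have "g dvd t" unfolding t g_def by (intro dvd_mod) auto
      then obtain s where s: "t = g * s" by (auto elim: dvdE)
      have "0 \<le> t" "t < d" using t d by auto
      hence "0 \<le> g * s" "g * s < g * m" using s dg by auto
      hence "0 \<le> s" "s < m" using g0 by (simp_all add: zero_le_mult_iff)
      thus "t \<in> T" unfolding T_def using s by auto
    qed
    show "w t \<ge> 0" for t unfolding w_def by simp
    fix t assume "t \<in> T"
    show "real (card {u\<in>H. (b*u) mod d = t}) \<le> real_of_int g"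
    proof (cases "{u\<in>H. (b*u) mod d = t} = {}")
      case True thus ?thesis using g0 by (simp only: card.empty)
    next
      case False
      then obtain u0 where u0: "u0 \<in> H" "(b*u0) mod d = t" by auto
      have "{u\<in>H. (b*u) mod d = t} \<subseteq> {u\<in>H. u mod m = u0 mod m}"
      proof
        fix u assume u: "u \<in> {u\<in>H. (b*u) mod d = t}"
        hence "(b*u) mod d = (b*u0) mod d" using u0 by simp
        hence "u mod (d div gcd b d) = u0 mod (d div gcd b d)"
          using b d by (intro mult_fiber_cong) auto
        thus "u \<in> {u\<in>H. u mod m = u0 mod m}" using u unfolding m_def g_def by simp
      qed
      hence "card {u\<in>H. (b*u) mod d = t} \<le> card {u\<in>H. u mod m = u0 mod m}"
        using fH by (intro card_mono) auto
      also have "\<dots> \<le> nat g" using class_card_interval0[of m g H] m0 g0 H dg by simp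
      finally show ?thesis using g0 by linarith
    qed
  qed
  also have "(\<Sum>t\<in>T. w t) = (\<Sum>s\<in>{0..<m}. (cmod (gs (g*m) C (g*s)))^2)"
    unfolding T_def w_def dg using g0 by (subst sum.reindex) (auto simp: inj_on_def)
  also have "\<dots> = real_of_int m * card {(x,y)\<in>C\<times>C. x mod m = y mod m}"
    using g0 m0 fC by (rule parseval)
  also have "\<dots> \<le> real_of_int m * (card C * nat g)"
  proof -
    have "card {(x,y)\<in>C\<times>C. x mod m = y mod m} \<le> card C * nat g"
      using fC by (rule pairs_card_le) (use class_card_interval0[of m g C] m0 g0 C dg in simp)
    hence "real (card {(x,y)\<in>C\<times>C. x mod m = y mod m}) \<le> real (card C * nat g)"
      by (rule of_nat_mono)
    hence "real (card {(x,y)\<in>C\<times>C. x mod m = y mod m}) \<le> real (card C) * real (nat g)"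
      by simp
    thus ?thesis using m0 by (intro mult_left_mono) auto
  qed
  finally have "real (card H) * w b \<le> real_of_int g * (real_of_int m * (card C * nat g))" 
    using g0 by simp
  also have "\<dots> = real (card H) * real_of_int (d * g)"
    using cH g0 dg by simp
  finally have "real (card H) * w b \<le> real (card H) * real_of_int (d * g)" .
  moreover have "card H > 0" using fH Hne by (simp add: card_gt_0_iff)
  ultimately show ?thesis unfolding w_def g_def by simp
qed


lemma gs_zero: "gs d A 0 = of_nat (card A)"
  unfolding gs_def by simp

lemma gsJ_bound:
  assumes g: "g > 0" and m: "m > 0" and L: "L \<ge> 0"
  shows "(\<Sum>s\<in>{1..<m}. (cmod (gs (g*m) {1..L} (g*s)))^2) \<le> real_of_int (m * L)"
proof -
  define J where "J = {1..L}"
  have fJ: "finite J" unfolding J_def by simp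
  have cJ: "card J = nat L" unfolding J_def by simp
  have "card {(x,y)\<in>J\<times>J. x mod m = y mod m} \<le> card J * nat (L div m + 1)"
    using fJ by (rule pairs_card_le) (use class_card_interval1[of m J L] m in \<open>simp add: J_def\<close>)
  hence "real (card {(x,y)\<in>J\<times>J. x mod m = y mod m}) \<le> real (card J * nat (L div m + 1))"
    by (rule of_nat_mono)
  also have "\<dots> = real_of_int L * real_of_int (L div m + 1)"
    using cJ L m by (simp add: pos_imp_zdiv_nonneg_iff)
  finally have P: "real (card {(x,y)\<in>J\<times>J. x mod m = y mod m}) \<le> real_of_int L * real_of_int (L div m + 1)" .
  have e: "m * (L div m) + L mod m = L" by (rule mult_div_mod_eq)
  have "L mod m \<ge> 0" using m by simp
  hence "m * (L div m) \<le> L" using e by linarith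
  hence "real_of_int (m * (L div m)) \<le> real_of_int L" by (simp only: of_int_le_iff)
  hence mm: "real_of_int m * real_of_int (L div m + 1) \<le> real_of_int L + real_of_int m"
    by (simp add: algebra_simps)
  have "(\<Sum>s\<in>{0..<m}. (cmod (gs (g*m) J (g*s)))^2) = real_of_int m * card {(x,y)\<in>J\<times>J. x mod m = y mod m}"
    using g m fJ by (rule parseval)
  also have "\<dots> \<le> real_of_int m * (real_of_int L * real_of_int (L div m + 1))"
    using P m by (intro mult_left_mono) auto
  also have "\<dots> = real_of_int L * (real_of_int m * real_of_int (L div m + 1))" by simp
  also have "\<dots> \<le> real_of_int L * (real_of_int L + real_of_int m)"
    using mm L by (intro mult_left_mono) auto
  finally have tot: "(\<Sum>s\<in>{0..<m}. (cmod (gs (g*m) J (g*s)))^2) \<le> real_of_int L * (real_of_int L + real_of_int m)" .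
  have "{0..<m} = insert 0 {1..<m}" using m by auto
  hence "(\<Sum>s\<in>{0..<m}. (cmod (gs (g*m) J (g*s)))^2) =
      (cmod (gs (g*m) J 0))^2 + (\<Sum>s\<in>{1..<m}. (cmod (gs (g*m) J (g*s)))^2)"
    by simp
  moreover have "(cmod (gs (g*m) J 0))^2 = (real_of_int L)^2"
    unfolding gs_zero cJ using L by simp
  ultimately show ?thesis using tot unfolding J_def by (simp add: algebra_simps power2_eq_square)
qed


definition Sd :: "nat \<Rightarrow> real" where
  "Sd n = (\<Sum>g | g dvd n. 1 / sqrt (real g))"

lemma stepA:
  assumes d: "d > 1" and C: "C \<subseteq> {0..<d}" and L: "L \<ge> 1"
  shows "(\<Sum>b\<in>{0..<d}. gs d {1..L} b ^ 2 * cnj (gs d C b)) =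
     of_int d * of_nat (card {p\<in>{1..L}\<times>{1..L}. (fst p + snd p) mod d \<in> C})"
proof -
  define J where "J = {1..L}"
  have fC: "finite C" using C by (rule finite_subset) simp
  have fJ: "finite J" unfolding J_def by simp
  have e3: "\<And>b j1 j2 x. ee d (b*j1) * ee d (b*j2) * ee d (-(b*x)) = ee d (b*(j1+j2-x))"
    by (simp add: ee_add[symmetric] algebra_simps)
  have "(\<Sum>b\<in>{0..<d}. gs d J b ^ 2 * cnj (gs d C b)) =
        (\<Sum>b\<in>{0..<d}. \<Sum>j1\<in>J. \<Sum>j2\<in>J. \<Sum>x\<in>C. ee d (b*(j1+j2-x)))"
  proof (intro sum.cong refl)
    fix b
    have "gs d J b ^ 2 * cnj (gs d C b) =
       (\<Sum>j1\<in>J. ee d (b*j1)) * (\<Sum>j2\<in>J. ee d (b*j2)) * (\<Sum>x\<in>C. ee d (-(b*x)))"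
      unfolding gs_def by (simp add: power2_eq_square cnj_sum ee_cnj)
    also have "\<dots> = (\<Sum>j1\<in>J. \<Sum>j2\<in>J. ee d (b*j1) * ee d (b*j2)) * (\<Sum>x\<in>C. ee d (-(b*x)))"
      by (simp only: sum_product)
    also have "\<dots> = (\<Sum>j1\<in>J. \<Sum>j2\<in>J. ee d (b*j1) * ee d (b*j2) * (\<Sum>x\<in>C. ee d (-(b*x))))"
      by (simp only: sum_distrib_right)
    also have "\<dots> = (\<Sum>j1\<in>J. \<Sum>j2\<in>J. \<Sum>x\<in>C. ee d (b*j1) * ee d (b*j2) * ee d (-(b*x)))"
      by (simp only: sum_distrib_left)
    finally show "gs d J b ^ 2 * cnj (gs d C b) = (\<Sum>j1\<in>J. \<Sum>j2\<in>J. \<Sum>x\<in>C. ee d (b*(j1+j2-x)))"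
      by (simp only: e3)
  qed
  also have "\<dots> = (\<Sum>j1\<in>J. \<Sum>j2\<in>J. \<Sum>x\<in>C. \<Sum>b\<in>{0..<d}. ee d (b*(j1+j2-x)))"
    by (simp add: sum.swap[of _ "{0..<d}"])
  also have "\<dots> = (\<Sum>j1\<in>J. \<Sum>j2\<in>J. if (j1+j2) mod d \<in> C then of_int d else 0)"
  proof (intro sum.cong refl)
    fix j1 j2
    have "(\<Sum>x\<in>C. \<Sum>b\<in>{0..<d}. ee d (b*(j1+j2-x))) = (\<Sum>x\<in>C. if x = (j1+j2) mod d then of_int d else 0)"
    proof (intro sum.cong refl)
      fix x assume x: "x \<in> C"
      hence x0: "0 \<le> x" "x < d" using C by auto
      have "(d dvd j1+j2-x) = ((j1+j2) mod d = x mod d)" by (simp add: mod_eq_dvd_iff)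
      also have "x mod d = x" using x0 by simp
      finally have "(d dvd j1+j2-x) = (x = (j1+j2) mod d)" by auto
      thus "(\<Sum>b\<in>{0..<d}. ee d (b*(j1+j2-x))) = (if x = (j1+j2) mod d then of_int d else 0)"
        using orth[of d "j1+j2-x"] d by simp
    qed
    also have "\<dots> = (if (j1+j2) mod d \<in> C then of_int d else 0)"
      using fC by (simp add: sum.delta)
    finally show "(\<Sum>x\<in>C. \<Sum>b\<in>{0..<d}. ee d (b*(j1+j2-x))) = (if (j1+j2) mod d \<in> C then of_int d else 0)" .
  qed
  also have "\<dots> = (\<Sum>p\<in>J\<times>J. if (fst p + snd p) mod d \<in> C then of_int d else 0)"
    by (simp add: sum.cartesian_product case_prod_beta)
  also have "\<dots> = of_nat (card {p\<in>J\<times>J. (fst p + snd p) mod d \<in> C}) * of_int d"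
    using fJ by (subst sum_if_card) simp_all
  finally show ?thesis unfolding J_def by (simp add: mult.commute)
qed


lemma divsum_le_Sd:
  assumes d: "d > 1"
  shows "(\<Sum>g\<in>{g. 0 < g \<and> g dvd d \<and> g < d}. 1 / sqrt (real_of_int g)) \<le> Sd (nat d)"
proof -
  define D where "D = {g::nat. g dvd nat d}"
  have fD: "finite D" unfolding D_def using d by simp
  have sub: "{g. 0 < g \<and> g dvd d \<and> g < d} \<subseteq> int ` D"
  proof
    fix g assume g: "g \<in> {g. 0 < g \<and> g dvd d \<and> g < d}"
    hence "g = int (nat g)" by simp
    moreover have "nat g dvd nat d" using g by (simp add: nat_dvd_iff)
    ultimately show "g \<in> int ` D" unfolding D_def by blast
  qed
  have "(\<Sum>g\<in>{g. 0 < g \<and> g dvd d \<and> g < d}. 1 / sqrt (real_of_int g)) \<le> (\<Sum>g\<in>int ` D. 1 / sqrt (real_of_int g))"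
    using fD sub by (intro sum_mono2) auto
  also have "\<dots> = (\<Sum>g\<in>D. 1 / sqrt (real g))" by (subst sum.reindex) auto
  also have "\<dots> = Sd (nat d)" unfolding Sd_def D_def ..
  finally show ?thesis .
qed

lemma stepE:
  assumes d: "d > 1" and C: "C \<subseteq> {0..<d}" and H: "H \<subseteq> {0..<d}" and cH: "card C = card H"
    and Hne: "H \<noteq> {}"
    and inv: "\<forall>u\<in>H. \<forall>x\<in>C. (u*x) mod d \<in> C" and cop: "\<forall>u\<in>H. coprime u d" and L: "L \<ge> 1"
  shows "(\<Sum>b\<in>{1..<d}. (cmod (gs d {1..L} b))^2 * cmod (gs d C b)) \<le> real_of_int L * (real_of_int d * sqrt d * Sd (nat d))"
proof -
  define J where "J = {1..L}"
  define G where "G = {g. 0 < g \<and> g dvd d \<and> g < d}"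
  have fG: "finite G" unfolding G_def by (rule finite_subset[of _ "{0..d}"]) auto
  define v where "v = (\<lambda>b. (cmod (gs d J b))^2)"
  have v0: "\<And>b. v b \<ge> 0" unfolding v_def by simp
  have b1: "cmod (gs d C b) \<le> (\<Sum>g\<in>G. if g dvd b then sqrt (real_of_int (d*g)) else 0)"
    if b: "b \<in> {1..<d}" for b
  proof -
    have "(cmod (gs d C b))^2 \<le> real_of_int (d * gcd b d)"
      using b by (intro gsC_bound[OF d C H cH Hne inv cop]) auto
    hence "cmod (gs d C b) \<le> sqrt (real_of_int (d * gcd b d))" by (simp add: real_le_rsqrt)
    also have "\<dots> = (if gcd b d dvd b then sqrt (real_of_int (d * gcd b d)) else 0)" by simp
    also have "\<dots> \<le> (\<Sum>g\<in>G. if g dvd b then sqrt (real_of_int (d*g)) else 0)"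
    proof (rule member_le_sum[where f="\<lambda>g. if g dvd b then sqrt (real_of_int (d*g)) else 0"])
      have "gcd b d \<le> b" using b by (intro gcd_le1_int) auto
      moreover have "b < d" using b by simp
      ultimately have "gcd b d < d" by linarith
      moreover have "gcd b d > 0" using b by auto
      ultimately show "gcd b d \<in> G" unfolding G_def by auto
      show "finite G" by fact
      fix g assume "g \<in> G - {gcd b d}"
      thus "0 \<le> (if g dvd b then sqrt (real_of_int (d*g)) else 0)" unfolding G_def using d by auto
    qed
    finally show ?thesis .
  qed
  have "(\<Sum>b\<in>{1..<d}. v b * cmod (gs d C b)) \<le> (\<Sum>b\<in>{1..<d}. v b * (\<Sum>g\<in>G. if g dvd b then sqrt (real_of_int (d*g)) else 0))"
    using b1 v0 by (intro sum_mono mult_left_mono) auto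
  also have "\<dots> = (\<Sum>g\<in>G. \<Sum>b\<in>{1..<d}. if g dvd b then v b * sqrt (real_of_int (d*g)) else 0)"
    by (simp add: sum_distrib_left sum.swap[of _ G] if_distrib cong: if_cong)
  also have "\<dots> = (\<Sum>g\<in>G. sqrt (real_of_int (d*g)) * (\<Sum>b\<in>{b\<in>{1..<d}. g dvd b}. v b))"
  proof (intro sum.cong refl)
    fix g
    have "(\<Sum>b\<in>{b\<in>{1..<d}. g dvd b}. v b * sqrt (real_of_int (d*g))) =
       (\<Sum>b\<in>{1..<d}. if g dvd b then v b * sqrt (real_of_int (d*g)) else 0)"
      by (rule sum.inter_filter) simp
    moreover have "sqrt (real_of_int (d*g)) * (\<Sum>b\<in>{b\<in>{1..<d}. g dvd b}. v b) =
       (\<Sum>b\<in>{b\<in>{1..<d}. g dvd b}. v b * sqrt (real_of_int (d*g)))"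
      by (simp add: sum_distrib_left mult.commute)
    ultimately show "(\<Sum>b\<in>{1..<d}. if g dvd b then v b * sqrt (real_of_int (d*g)) else 0) =
       sqrt (real_of_int (d*g)) * (\<Sum>b\<in>{b\<in>{1..<d}. g dvd b}. v b)" by simp
  qed
  also have "\<dots> \<le> (\<Sum>g\<in>G. real_of_int L * (real_of_int d * sqrt d) * (1 / sqrt (real_of_int g)))"
  proof (rule sum_mono)
    fix g assume g: "g \<in> G"
    define m where "m = d div g"
    have g0: "g > 0" and gd: "g dvd d" using g unfolding G_def by auto
    have dg: "d = g * m" unfolding m_def using gd by simp
    have "0 < g * m" using d dg by simp
    hence m0: "m > 0" using g0 by (rule zero_less_mult_pos)
    have img: "{b\<in>{1..<d}. g dvd b} = (\<lambda>s. g*s) ` {1..<m}"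
    proof (rule equalityI; rule subsetI)
      fix b assume "b \<in> {b\<in>{1..<d}. g dvd b}"
      then obtain s where s: "b = g*s" and b: "1 \<le> b" "b < d" by (auto elim: dvdE)
      have "0 < g*s" "g*s < g*m" using s b dg by auto
      hence "0 < s" "s < m" using g0 by (simp_all add: zero_less_mult_iff)
      thus "b \<in> (\<lambda>s. g*s) ` {1..<m}" using s by auto
    next
      fix b assume "b \<in> (\<lambda>s. g*s) ` {1..<m}"
      then obtain s where s: "b = g*s" "s \<in> {1..<m}" by (rule imageE) blast
      hence s: "b = g*s" "1 \<le> s" "s < m" by auto
      have "g*s < g*m" using s g0 by simp
      moreover have "1 * 1 \<le> g*s" using s g0 by (intro mult_mono) auto
      ultimately show "b \<in> {b\<in>{1..<d}. g dvd b}" using s dg by auto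
    qed
    have "(\<Sum>b\<in>{b\<in>{1..<d}. g dvd b}. v b) = (\<Sum>b\<in>(\<lambda>s. g*s) ` {1..<m}. v b)"
      by (simp only: img)
    also have "\<dots> = (\<Sum>s\<in>{1..<m}. v (g*s))"
      using g0 by (subst sum.reindex) (auto simp: inj_on_def)
    also have "\<dots> = (\<Sum>s\<in>{1..<m}. (cmod (gs (g*m) {1..L} (g*s)))^2)"
      by (simp add: v_def J_def flip: dg)
    also have "\<dots> \<le> real_of_int (m * L)" using g0 m0 L by (intro gsJ_bound) auto
    finally have S: "(\<Sum>b\<in>{b\<in>{1..<d}. g dvd b}. v b) \<le> real_of_int (m * L)" .
    have "sqrt (real_of_int (d*g)) * (\<Sum>b\<in>{b\<in>{1..<d}. g dvd b}. v b) \<le> sqrt (real_of_int (d*g)) * real_of_int (m * L)"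
      using S d g0 by (intro mult_left_mono) auto
    also have "\<dots> = real_of_int L * (real_of_int d * sqrt d) * (1 / sqrt (real_of_int g))"
    proof -
      have sg: "sqrt (real_of_int g) > 0" using g0 by simp
      have "real_of_int d = real_of_int g * real_of_int m" using dg by simp
      moreover have "real_of_int g = sqrt (real_of_int g) * sqrt (real_of_int g)" using g0 by simp
      ultimately have "real_of_int m = real_of_int d / (sqrt (real_of_int g) * sqrt (real_of_int g))"
        using sg by (simp add: field_simps)
      thus ?thesis using sg by (simp add: real_sqrt_mult field_simps)
    qed
    finally show "sqrt (real_of_int (d*g)) * (\<Sum>b\<in>{b\<in>{1..<d}. g dvd b}. v b) \<le> real_of_int L * (real_of_int d * sqrt d) * (1 / sqrt (real_of_int g))" .
  qed
  also have "\<dots> = real_of_int L * (real_of_int d * sqrt d) * (\<Sum>g\<in>G. 1 / sqrt (real_of_int g))"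
    by (simp add: sum_distrib_left)
  also have "\<dots> \<le> real_of_int L * (real_of_int d * sqrt d) * Sd (nat d)"
    using divsum_le_Sd[OF d] L d unfolding G_def by (intro mult_left_mono) auto
  finally show ?thesis unfolding v_def J_def by (simp add: mult.assoc)
qed


lemma core:
  fixes d L :: int and C H :: "int set"
  assumes d: "d > 1" and C: "C \<subseteq> {0..<d}" and H: "H \<subseteq> {0..<d}" and cH: "card C = card H"
   and Hne: "H \<noteq> {}"
   and inv: "\<forall>u\<in>H. \<forall>x\<in>C. (u*x) mod d \<in> C" and cop: "\<forall>u\<in>H. coprime u d" and L: "L \<ge> 1"
   and big: "real_of_int L * card C > real_of_int d * sqrt d * Sd (nat d)"
  shows "\<exists>j1\<in>{1..L}. \<exists>j2\<in>{1..L}. (j1+j2) mod d \<in> C"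
proof -
  define J where "J = {1..L}"
  define P where "P = {p\<in>J\<times>J. (fst p + snd p) mod d \<in> C}"
  define R where "R = (\<Sum>b\<in>{1..<d}. gs d J b ^ 2 * cnj (gs d C b))"
  have A: "(\<Sum>b\<in>{0..<d}. gs d J b ^ 2 * cnj (gs d C b)) = of_int d * of_nat (card P)"
    unfolding J_def P_def by (rule stepA[OF d C L])
  have split: "{0..<d} = insert 0 {1..<d}" using d by auto
  have cJ: "card J = nat L" unfolding J_def by simp
  have eq: "of_int d * of_nat (card P) = (of_int L)^2 * of_nat (card C) + R"
  proof -
    have "(\<Sum>b\<in>{0..<d}. gs d J b ^ 2 * cnj (gs d C b)) = gs d J 0 ^ 2 * cnj (gs d C 0) + R"
      unfolding R_def split by simp
    also have "gs d J 0 = of_int L" unfolding gs_zero cJ using L by simp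
    also have "cnj (gs d C 0) = of_nat (card C)" unfolding gs_zero by simp
    finally show ?thesis using A by simp
  qed
  have nR: "norm R \<le> (\<Sum>b\<in>{1..<d}. (cmod (gs d J b))^2 * cmod (gs d C b))"
    unfolding R_def by (rule order_trans[OF norm_sum]) (simp add: norm_mult norm_power)
  have E: "(\<Sum>b\<in>{1..<d}. (cmod (gs d J b))^2 * cmod (gs d C b)) \<le> real_of_int L * (real_of_int d * sqrt d * Sd (nat d))"
    unfolding J_def by (rule stepE[OF d C H cH Hne inv cop L])
  have "Re (of_int d * of_nat (card P)) = real_of_int d * real (card P)" by simp
  moreover have "Re ((of_int L)^2 * of_nat (card C) + R) = (real_of_int L)^2 * real (card C) + Re R"
    by simp
  moreover have "Re R \<ge> - norm R" using abs_Re_le_cmod[of R] by linarith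
  ultimately have "real_of_int d * real (card P) \<ge> (real_of_int L)^2 * real (card C) - norm R"
    using eq by simp
  hence "real_of_int d * real (card P) \<ge> real_of_int L * (real_of_int L * real (card C) - real_of_int d * sqrt d * Sd (nat d))"
    using nR E by (simp add: algebra_simps power2_eq_square)
  moreover have "real_of_int L * (real_of_int L * real (card C) - real_of_int d * sqrt d * Sd (nat d)) > 0"
    using big L by simp
  ultimately have "real_of_int d * real (card P) > 0" by linarith
  hence "card P > 0" using d by (simp add: zero_less_mult_iff)
  hence "P \<noteq> {}" by auto
  then obtain j1 j2 where "(j1,j2) \<in> P" by auto
  hence "j1 \<in> {1..L}" "j2 \<in> {1..L}" "(j1+j2) mod d \<in> C" unfolding P_def J_def by auto
  thus ?thesis by blast
qed



lemma Sd_nonneg: "Sd n \<ge> 0"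
  unfolding Sd_def by (intro sum_nonneg) simp

lemma Sd_mult:
  assumes "coprime a b" "a > 0" "b > 0"
  shows "Sd (a*b) = Sd a * Sd b"
proof -
  let ?f = "\<lambda>g::nat. 1 / sqrt (real g)"
  have bij: "bij_betw (\<lambda>(x,y). x*y) ({x. x dvd a} \<times> {y. y dvd b}) {z. z dvd a*b}"
  proof (rule bij_betwI')
    fix p q assume p: "p \<in> {x. x dvd a} \<times> {y. y dvd b}" and q: "q \<in> {x. x dvd a} \<times> {y. y dvd b}"
    obtain x1 y1 where p': "p = (x1,y1)" by (cases p)
    obtain x2 y2 where q': "q = (x2,y2)" by (cases q)
    have d: "x1 dvd a" "y1 dvd b" "x2 dvd a" "y2 dvd b" using p q p' q' by auto
    show "((\<lambda>(x,y). x*y) p = (\<lambda>(x,y). x*y) q) = (p = q)"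
    proof
      assume eq: "(\<lambda>(x,y). x*y) p = (\<lambda>(x,y). x*y) q"
      hence e: "x1*y1 = x2*y2" using p' q' by simp
      have c12: "coprime x1 y2" "coprime x2 y1"
        using d assms(1) coprime_imp_coprime by (meson coprime_divisors)+
      have "x1 dvd x2*y2" using e by (metis dvd_triv_left)
      hence "x1 dvd x2" using c12(1) by (simp add: coprime_dvd_mult_left_iff)
      moreover have "x2 dvd x1*y1" using e by (metis dvd_triv_left)
      hence "x2 dvd x1" using c12(2) by (simp add: coprime_dvd_mult_left_iff)
      ultimately have "x1 = x2" by (rule dvd_antisym)
      moreover have "x1 > 0" using d assms by (metis dvd_0_left_iff gr0I)
      ultimately have "y1 = y2" using e by simp
      thus "p = q" using \<open>x1 = x2\<close> p' q' by simp
    qed simp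
  next
    fix p assume "p \<in> {x. x dvd a} \<times> {y. y dvd b}"
    thus "(\<lambda>(x,y). x*y) p \<in> {z. z dvd a*b}" by (auto intro: mult_dvd_mono)
  next
    fix z assume "z \<in> {z. z dvd a*b}"
    then obtain x y where "z = x*y" "x dvd a" "y dvd b" using division_decomp by blast
    thus "\<exists>p\<in>{x. x dvd a} \<times> {y. y dvd b}. z = (\<lambda>(x,y). x*y) p" by auto
  qed
  have fa: "finite {x. x dvd a}" "finite {y. y dvd b}" using assms by auto
  have "Sd (a*b) = (\<Sum>z\<in>{z. z dvd a*b}. ?f z)" unfolding Sd_def by simp
  also have "\<dots> = (\<Sum>p\<in>{x. x dvd a} \<times> {y. y dvd b}. ?f ((\<lambda>(x,y). x*y) p))"
    using bij by (rule sum.reindex_bij_betw[symmetric])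
  also have "\<dots> = (\<Sum>p\<in>{x. x dvd a} \<times> {y. y dvd b}. (\<lambda>(x,y). ?f x * ?f y) p)"
    by (intro sum.cong refl) (auto simp: real_sqrt_mult)
  also have "\<dots> = (\<Sum>x\<in>{x. x dvd a}. \<Sum>y\<in>{y. y dvd b}. ?f x * ?f y)"
    by (rule sum.cartesian_product[symmetric])
  also have "\<dots> = Sd a * Sd b" unfolding Sd_def by (simp add: sum_product)
  finally show ?thesis .
qed

lemma Sd_pp:
  assumes p: "prime p" and a: "a > 0"
  shows "Sd (p^a) * real (p^a) \<le> 7 * real (totient (p^a))"
proof -
  have p2: "p \<ge> 2" using p prime_ge_2_nat by blast
  define r where "r = 1 / sqrt (real p)"
  have r0: "r \<ge> 0" unfolding r_def by simp
  have "sqrt (real p) \<ge> sqrt 2" using p2 by simp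
  moreover have "sqrt 2 > (1.41::real)" by (rule real_less_rsqrt) (simp add: power2_eq_square)
  ultimately have "sqrt (real p) > 1.41" by linarith
  hence "1 / sqrt (real p) < 1 / 1.41" using p2 by (intro divide_strict_left_mono) auto
  hence r1: "r < 0.71" unfolding r_def by simp
  have img: "{x. x dvd p^a} = (\<lambda>i. p^i) ` {..a}"
    using divides_primepow_nat[OF p] by auto
  have inj: "inj_on (\<lambda>i. p^i) {..a}" using p2 by (auto intro!: inj_onI simp: power_inject_exp)
  have "Sd (p^a) = (\<Sum>i\<le>a. 1 / sqrt (real (p^i)))"
    unfolding Sd_def img by (simp add: sum.reindex[OF inj])
  also have "\<dots> = (\<Sum>i\<le>a. r^i)"
    unfolding r_def by (intro sum.cong refl) (simp add: real_sqrt_power power_one_over)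
  also have "\<dots> = (1 - r^(Suc a)) / (1 - r)"
    using sum_gp_strict[of r "Suc a"] r1 by (simp add: lessThan_Suc_atMost)
  also have "\<dots> \<le> 1 / (1 - r)" using r0 r1 by (intro divide_right_mono) auto
  also have "\<dots> \<le> 3.5" using r0 r1 by (simp add: field_simps)
  finally have S: "Sd (p^a) \<le> 3.5" .
  have tp: "totient (p^a) = p^(a-1) * (p-1)" using totient_prime_power[OF p a] .
  have pa: "p^a = p^(a-1) * p" using a by (cases a) auto
  have "p \<le> 2*(p-1)" using p2 by simp
  hence "p^(a-1)*p \<le> p^(a-1)*(2*(p-1))" by (rule mult_left_mono) simp
  also have "\<dots> = 2 * totient (p^a)" unfolding tp by simp
  finally have "p^a \<le> 2 * totient (p^a)" unfolding pa .
  hence "real (p^a) \<le> real (2 * totient (p^a))" by (rule of_nat_mono)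
  hence "real (p^a) \<le> 2 * real (totient (p^a))" by simp
  hence "Sd (p^a) * real (p^a) \<le> 3.5 * (2 * real (totient (p^a)))"
    using S by (intro mult_mono) (auto simp: Sd_def intro!: sum_nonneg)
  thus ?thesis by simp
qed

lemma Sd_pp':
  assumes p: "prime p" and a: "a > 0"
  shows "Sd (p^a) * real (p^a) \<le> (if p < 2401 then 7 else 1) * real (p^a) powr (1/4) * real (totient (p^a))"
proof (cases "p < 2401")
  case True
  have "real (p^a) \<ge> 1" using p prime_gt_0_nat by (simp add: Suc_leI)
  hence "real (p^a) powr (1/4) \<ge> 1" by (rule ge_one_powr_ge_zero) simp
  hence "7 * real (totient (p^a)) \<le> 7 * real (p^a) powr (1/4) * real (totient (p^a))"
    by (simp add: mult_right_mono)
  thus ?thesis using Sd_pp[OF assms] True by simp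
next
  case False
  have "real (p^a) \<ge> real p" using p a prime_ge_1_nat[OF p] self_le_power[of p a] by simp
  hence "real (p^a) \<ge> 2401" using False by linarith
  hence "real (p^a) powr (1/4) \<ge> 2401 powr (1/4)" by (intro powr_mono2) auto
  moreover have "(2401::real) powr (1/4) = 7"
  proof -
    have "(2401::real) = 7 powr 4" by simp
    thus ?thesis by (simp add: powr_powr)
  qed
  ultimately have "7 \<le> real (p^a) powr (1/4)" by simp
  hence "7 * real (totient (p^a)) \<le> real (p^a) powr (1/4) * real (totient (p^a))"
    by (intro mult_right_mono) auto
  hence "Sd (p^a) * real (p^a) \<le> real (p^a) powr (1/4) * real (totient (p^a))"
    using Sd_pp[OF assms] by linarith
  thus ?thesis using False by simp
qed


lemma AR_ind:
  "n > 0 \<Longrightarrow> Sd n * real n \<le> 7 ^ card {p \<in> prime_factors n. p < 2401} * real n powr (1/4) * real (totient n)"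
proof (induction n rule: less_induct)
  case (less n)
  show ?case
  proof (cases "n = 1")
    case True
    have "{g. g dvd (1::nat)} = {1}" by auto
    thus ?thesis using True by (simp add: Sd_def)
  next
    case False
    with less.prems have n1: "n > 1" by simp
    obtain p where p: "prime p" "p dvd n" using prime_factor_nat[of n] False by auto
    define a where "a = multiplicity p n"
    have a: "a > 0" unfolding a_def using p less.prems
      by (simp add: prime_multiplicity_gt_zero_iff)
    define r where "r = n div p^a"
    have nr: "n = p^a * r" unfolding r_def a_def by (simp add: multiplicity_dvd)
    have npr: "\<not> p dvd r" unfolding r_def a_def
      using multiplicity_decompose[of n p] less.prems p prime_gt_1_nat[of p] by simp
    have cop: "coprime (p^a) r" using npr p by (simp add: prime_imp_coprime)
    have r0: "r > 0" using nr less.prems by (auto intro: gr0I)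
    have pa1: "p^a > 1" using p a by (metis one_less_power prime_gt_1_nat)
    have rn: "r < n" using nr r0 pa1 by simp
    note IH = less.IH[OF rn r0]
    have pfn: "prime_factors n = insert p (prime_factors r)"
    proof -
      have "prime_factors n = prime_factors (p^a) \<union> prime_factors r"
        unfolding nr using r0 p by (intro prime_factors_product) auto
      also have "prime_factors (p^a) = {p}" using a p by (simp add: prime_factors_power prime_prime_factors)
      finally show ?thesis by simp
    qed
    have pnr: "p \<notin> prime_factors r" using npr by auto
    define c where "c = (if p < 2401 then 7 else 1 :: real)"
    have cn: "(7::real) ^ card {q \<in> prime_factors n. q < 2401} = c * 7 ^ card {q \<in> prime_factors r. q < 2401}"
    proof (cases "p < 2401")
      case True
      hence "{q \<in> prime_factors n. q < 2401} = insert p {q \<in> prime_factors r. q < 2401}"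
        using pfn by auto
      thus ?thesis using pnr True by (simp add: c_def)
    next
      case False
      hence "{q \<in> prime_factors n. q < 2401} = {q \<in> prime_factors r. q < 2401}"
        using pfn by auto
      thus ?thesis using False by (simp add: c_def)
    qed
    have P: "Sd (p^a) * real (p^a) \<le> c * real (p^a) powr (1/4) * real (totient (p^a))"
      using Sd_pp'[OF p(1) a] by (simp add: c_def)
    have nn1: "0 \<le> Sd (p^a) * real (p^a)" by (intro mult_nonneg_nonneg Sd_nonneg) simp
    have nn2: "0 \<le> Sd r * real r" by (intro mult_nonneg_nonneg Sd_nonneg) simp
    have c0: "c \<ge> 0" by (simp add: c_def)
    have "Sd n * real n = (Sd (p^a) * real (p^a)) * (Sd r * real r)"
      unfolding nr using cop a r0 p by (simp add: Sd_mult prime_gt_0_nat)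
    also have "\<dots> \<le> (c * real (p^a) powr (1/4) * real (totient (p^a))) *
        (7 ^ card {q \<in> prime_factors r. q < 2401} * real r powr (1/4) * real (totient r))"
      by (rule mult_mono[OF P IH _ nn2]) (use c0 in simp)
    also have "\<dots> = (c * 7 ^ card {q \<in> prime_factors r. q < 2401}) * (real (p^a) * real r) powr (1/4)
        * (real (totient (p^a)) * real (totient r))"
      by (simp add: powr_mult)
    also have "\<dots> = 7 ^ card {q \<in> prime_factors n. q < 2401} * real n powr (1/4) * real (totient n)"
    proof -
      have "real (totient (p^a)) * real (totient r) = real (totient n)"
        unfolding nr using cop by (simp add: totient_mult_coprime)
      moreover have "real (p^a) * real r = real n" unfolding nr by simp
      ultimately show ?thesis using cn by simp
    qed
    finally show ?thesis .
  qed
qed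

definition Kc :: real where "Kc = 7 ^ 2401"

lemma Kc_pos: "Kc > 0"
  unfolding Kc_def by (rule zero_less_power) simp

lemma AR: "n > 0 \<Longrightarrow> Sd n * real n \<le> Kc * real n powr (1/4) * real (totient n)"
proof -
  assume n: "n > 0"
  have "card {p \<in> prime_factors n. p < 2401} \<le> card {..<(2401::nat)}"
    by (intro card_mono) auto
  hence "card {p \<in> prime_factors n. p < 2401} \<le> 2401" by simp
  hence "(7::real) ^ card {p \<in> prime_factors n. p < 2401} \<le> 7 ^ 2401"
    by (intro power_increasing) auto
  hence "(7::real) ^ card {p \<in> prime_factors n. p < 2401} \<le> Kc" unfolding Kc_def .
  hence "7 ^ card {p \<in> prime_factors n. p < 2401} * real n powr (1/4) * real (totient n)
     \<le> Kc * real n powr (1/4) * real (totient n)"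
    by (intro mult_right_mono) auto
  thus ?thesis using AR_ind[OF n] by linarith
qed

lemma plumbing:
  fixes d :: nat
  assumes d: "d > 1" and H: "subgroup H (units_mod d)" and C: "C \<in> rcosets\<^bsub>units_mod d\<^esub> H"
  shows "C \<subseteq> {0..<int d}" "H \<subseteq> {0..<int d}" "card C = card H" "H \<noteq> {}"
   "\<forall>u\<in>H. \<forall>x\<in>C. (u*x) mod d \<in> C" "\<forall>u\<in>H. coprime u d"
   "card (rcosets\<^bsub>units_mod d\<^esub> H) * card H = totient d"
proof -
  interpret residues "int d" "residue_ring (int d)"
    by unfold_locales (use d in auto)
  interpret G: group "units_mod d" by (rule units_group)
  have carr: "carrier (units_mod d) = {x. 0 < x \<and> x < int d \<and> coprime x (int d)}"
    by (simp add: units_of_carrier res_units_eq)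
  have mult: "\<And>x y. x \<otimes>\<^bsub>units_mod d\<^esub> y = (x*y) mod int d"
    by (simp add: units_of_mult residue_ring_def)
  have Hc: "H \<subseteq> carrier (units_mod d)" using H by (rule subgroup.subset)
  then show H1: "H \<subseteq> {0..<int d}" "\<forall>u\<in>H. coprime u d" using carr by auto
  from C obtain a where a: "a \<in> carrier (units_mod d)" and Ca: "C = H #>\<^bsub>units_mod d\<^esub> a"
    unfolding RCOSETS_def by auto
  have "C \<subseteq> carrier (units_mod d)" unfolding Ca using Hc a by (rule G.r_coset_subset_G)
  then show "C \<subseteq> {0..<int d}" using carr by auto
  show "card C = card H" using G.card_rcosets_equal[OF C Hc] by simp
  show "H \<noteq> {}" using subgroup.one_closed[OF H] by auto
  show "\<forall>u\<in>H. \<forall>x\<in>C. (u*x) mod d \<in> C"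
  proof (intro ballI)
    fix u x assume u: "u \<in> H" and x: "x \<in> C"
    then obtain h where h: "h \<in> H" and xh: "x = h \<otimes>\<^bsub>units_mod d\<^esub> a"
      unfolding Ca r_coset_def by auto
    have "u \<otimes>\<^bsub>units_mod d\<^esub> x = (u \<otimes>\<^bsub>units_mod d\<^esub> h) \<otimes>\<^bsub>units_mod d\<^esub> a"
      using xh u h Hc a by (simp add: G.m_assoc subsetD)
    moreover have "u \<otimes>\<^bsub>units_mod d\<^esub> h \<in> H" using H u h by (rule subgroup.m_closed)
    ultimately have "u \<otimes>\<^bsub>units_mod d\<^esub> x \<in> C" unfolding Ca r_coset_def by auto
    then show "(u*x) mod d \<in> C" by (simp add: mult)
  qed
  have "order (units_mod d) = totient d"
    using totient_eq by (simp add: order_def units_of_carrier)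
  then show "card (rcosets\<^bsub>units_mod d\<^esub> H) * card H = totient d"
    using G.lagrange[OF H] by simp
qed

theorem proposition5p1:
  fixes n g :: nat
  assumes "n > 0" and "g > 0"
  shows "\<exists>d0::nat. \<forall>d::nat. d > d0 \<longrightarrow>
           (\<forall>H. subgroup H (units_mod d) \<and> card (rcosets\<^bsub>units_mod d\<^esub> H) = 2 * g \<longrightarrow>
              (\<forall>C \<in> rcosets\<^bsub>units_mod d\<^esub> H.
                 \<exists>a \<in> C. 0 < a \<and> real_of_int a < real d / real n))"
proof -
  define K :: real where "K = Kc"
  have K0: "K > 0" by (simp add: K_def Kc_pos)
  define A :: real where "A = (2*n+1)*(2*g*K+1)"
  have A1: "A \<ge> 3" 
  proof -
    have "real (2*n+1) \<ge> 3" using assms by simp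
    moreover have "2*g*K+1 \<ge> 1" using K0 by simp
    ultimately have "(2*n+1)*(2*g*K+1) \<ge> 3 * 1" by (intro mult_mono) auto
    thus ?thesis unfolding A_def by simp
  qed
  show ?thesis
  proof (intro exI[of _ "nat \<lceil>A^4\<rceil>"] allI impI ballI)
    fix d :: nat and H C
    assume dA: "nat \<lceil>A^4\<rceil> < d"
      and HH: "subgroup H (units_mod d) \<and> card (rcosets\<^bsub>units_mod d\<^esub> H) = 2 * g"
      and C: "C \<in> rcosets\<^bsub>units_mod d\<^esub> H"
    have dA': "real d \<ge> A^4" using dA by linarith
    have "A^4 \<ge> 3^4" using A1 by (intro power_mono) auto
    hence "real d \<ge> 81" using dA' by simp
    hence d1: "d > 1" by simp
    note P = plumbing[OF d1 HH[THEN conjunct1] C]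
    define q where "q = real d powr (1/4)"
    have q0: "q > 0" unfolding q_def using d1 by simp
    have q4: "q^4 = real d" unfolding q_def using d1
      by (simp add: powr_realpow[symmetric] powr_powr)
    have sq: "sqrt (real d) = q^2"
    proof -
      have "real d = (q^2)^2" using q4 by simp
      hence "sqrt (real d) = sqrt ((q^2)^2)" by simp
      also have "\<dots> = q^2" using real_sqrt_abs[of "q^2"] by simp
      finally show ?thesis .
    qed
    have qA: "q \<ge> A"
    proof (rule ccontr)
      assume "\<not> A \<le> q" hence "q^4 < A^4" using q0 by (intro power_strict_mono) auto
      thus False using q4 dA' by simp
    qed
    have tot: "2 * g * card H = totient d" using P(7) HH by simp
    have tpos: "totient d > 0" using d1 by simp
    define L where "L = int d div (2*n+1)"
    have Lfl: "real_of_int L = of_int \<lfloor>real d / (2*n+1)\<rfloor>"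
      unfolding L_def by (metis floor_divide_of_int_eq of_int_of_nat_eq of_nat_1 of_nat_add of_nat_mult of_int_numeral of_nat_numeral) 
    have L1: "real_of_int L > real d / (2*n+1) - 1"
      unfolding Lfl by linarith
    have L2: "real_of_int L \<le> real d / (2*n+1)"
      unfolding Lfl by linarith
    have "real d = q * q^3" using q4 by (simp add: power_numeral_reduce)
    also have "\<dots> \<ge> A * q^3" using qA q0 by (intro mult_right_mono) auto
    finally have dq: "real d \<ge> (2*n+1)*(2*g*K+1) * q^3" unfolding A_def .
    have q3: "q^3 \<ge> 1" using qA A1 by (simp add: one_le_power)
    have "real d / (2*n+1) \<ge> (2*g*K+1) * q^3" using dq by (simp add: field_simps)
    hence LK: "real_of_int L > 2*g*K*q^3" using L1 q3 by (simp add: algebra_simps)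
    have "2*g*K*q^3 > 0" using K0 q0 assms by simp
    hence Lpos: "L \<ge> 1" using LK by linarith
    have AR': "Sd d * real d \<le> K * q * real (totient d)" using AR[of d] d1 unfolding K_def q_def by simp
    have cardC: "real (card C) = real (totient d) / (2*g)" using P(3) tot assms
      by (simp add: field_simps flip: of_nat_mult)
    have "real_of_int (int d) * sqrt (real_of_int (int d)) * Sd (nat (int d)) = q^2 * (Sd d * real d)"
      using sq by simp
    also have "\<dots> \<le> q^2 * (K * q * real (totient d))" using AR' by (intro mult_left_mono) auto
    also have "\<dots> = (2*g*K*q^3) * (real (totient d) / (2*g))" using assms by (simp add: field_simps power_numeral_reduce)
    also have "\<dots> < real_of_int L * (real (totient d) / (2*g))"
      using LK tpos assms by (intro mult_strict_right_mono) auto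
    finally have ineq: "real_of_int (int d) * sqrt (real_of_int (int d)) * Sd (nat (int d)) < real_of_int L * card C"
      using cardC by simp
    obtain j1 j2 where j: "j1 \<in> {1..L}" "j2 \<in> {1..L}" "(j1+j2) mod int d \<in> C"
      using core[OF _ P(1-6) Lpos ineq] d1 by auto
    have "real_of_int L * (2*n+1) \<le> real d" using L2 by (simp add: field_simps)
    moreover have "real_of_int L * 2 < real_of_int L * (2*n+1)" using Lpos assms
      by (intro mult_strict_left_mono) auto
    ultimately have "2 * real_of_int L < real d" by simp
    hence "2*L < int d" by linarith
    hence "(j1+j2) mod int d = j1+j2" using j by auto
    hence jC: "j1 + j2 \<in> C" using j by simp
    have "real_of_int (j1+j2) \<le> 2 * real_of_int L" using j by simp
    also have "\<dots> \<le> 2 * (real d / (2*n+1))" using L2 by simp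
    also have "\<dots> < real d / real n" using assms d1 by (simp add: field_simps)
    finally show "\<exists>a\<in>C. 0 < a \<and> real_of_int a < real d / real n"
      using jC j by (intro bexI[of _ "j1+j2"]) auto
  qed
qed
end
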